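(* Let $a\ge b\ge2$ and $k$ be integers with $k\ge a+b+2$. Then for every $(i,j)\in C_3\cup\overline{C}_3$ we have $w_1,w_4,w_5,w_6\in\mathcal{R}^k_{(a,b),(i,j)}$.
   Context: $\widehat{\mathfrak{su}}(3)_k$ fusion. Let $P_+^k=\{(\lambda_1,\lambda_2)\in\mathbb{Z}_{\ge0}^2:\lambda_1+\lambda_2\le k\}$. For $\lambda,\mu,\nu\in P_+^k$ set - $\mathcal{A}=\tfrac13[2(\lambda_1+\mu_1+\nu_2)+\lambda_2+\mu_2+\nu_1]$, - $\mathcal{B}=\tfrac13[\lambda_1+\mu_1+\nu_2+2(\lambda_2+\mu_2+\nu_1)]$, - $k_0^{\max}=\min(\mathcal{A},\mathcal{B})$, - $k_0^{\min}=\max(\lambda_1+\lambda_2,\mu_1+\mu_2,\nu_1+\nu_2,\mathcal{A}-\lambda_1,\mathcal{A}-\mu_1,\mathcal{A}-\nu_2,\mathcal{B}-\lambda_2,\mathcal{B}-\mu_2,\mathcal{B}-\nu_1)$. The fusion multiplicity is $N^{(k)\nu}_{\lambda,\mu}=\min(k_0^{\max},k)-k_0^{\min}+1$ if $\mathcal{A},\mathcal{B}$ are nonnegative integers, $k_0^{\max}\ge k_0^{\min}$ and $k\ge k_0^{\min}$; otherwise it is $0$. The set $\mathcal{R}^k_{\lambda,\mu}$ is $\{\nu\in P_+^k:N^{(k)\nu}_{\lambda,\mu}\ne0\}$. The candidate weights are $w_1=(a-1,b+2)$, $w_2=(a+2,b-1)$, $w_3=(a+1,b-2)$, $w_4=(a-2,b+1)$,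 $w_5=(a+1,b+1)$, $w_6=(a-1,b-1)$. The sets are defined by - $C_3=\{(0,3l):l\in\mathbb{Z},\ 1\le l\le\min(k-a-b-1,b-1)\}$, - $\overline{C}_3=\{(3l,0):l\in\mathbb{Z},\ 1\le l\le\min(k-a-b-1,b-1)\}$. *)

theory Defs
  imports Complex_Main
begin

type_synonym wt = "int \<times> int"

definition dominant :: "int \<Rightarrow> wt set" where
  "dominant k = {(l1, l2). 0 \<le> l1 \<and> 0 \<le> l2 \<and> l1 + l2 \<le> k}"

definition fusA :: "wt \<Rightarrow> wt \<Rightarrow> wt \<Rightarrow> rat" where
  "fusA lam mu nu = (2 * of_int (fst lam + fst mu + snd nu) + of_int (snd lam + snd mu + fst nu)) / 3"

definition fusB :: "wt \<Rightarrow> wt \<Rightarrow> wt \<Rightarrow> rat" where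
  "fusB lam mu nu = (of_int (fst lam + fst mu + snd nu) + 2 * of_int (snd lam + snd mu + fst nu)) / 3"

definition k0max :: "wt \<Rightarrow> wt \<Rightarrow> wt \<Rightarrow> rat" where
  "k0max lam mu nu = min (fusA lam mu nu) (fusB lam mu nu)"

definition k0min :: "wt \<Rightarrow> wt \<Rightarrow> wt \<Rightarrow> rat" where
  "k0min lam mu nu = (let A = fusA lam mu nu; B = fusB lam mu nu in
     Max {of_int (fst lam + snd lam), of_int (fst mu + snd mu), of_int (fst nu + snd nu),
          A - of_int (fst lam), A - of_int (fst mu), A - of_int (snd nu),
          B - of_int (snd lam), B - of_int (snd mu), B - of_int (fst nu)})"

definition fusion_mult :: "int \<Rightarrow> wt \<Rightarrow> wt \<Rightarrow> wt \<Rightarrow> rat" where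
  "fusion_mult k lam mu nu =
     (let A = fusA lam mu nu; B = fusB lam mu nu in
      if A \<in> \<int> \<and> 0 \<le> A \<and> B \<in> \<int> \<and> 0 \<le> B \<and> k0max lam mu nu \<ge> k0min lam mu nu
         \<and> of_int k \<ge> k0min lam mu nu
      then min (k0max lam mu nu) (of_int k) - k0min lam mu nu + 1 else 0)"

definition fusionR :: "int \<Rightarrow> wt \<Rightarrow> wt \<Rightarrow> wt set" where
  "fusionR k lam mu = {nu \<in> dominant k. fusion_mult k lam mu nu \<noteq> 0}"

definition C3 :: "int \<Rightarrow> int \<Rightarrow> int \<Rightarrow> wt set" where
  "C3 a b k = {(0, 3 * l) | l. 1 \<le> l \<and> l \<le> min (k - a - b - 1) (b - 1)}"

definition C3bar :: "int \<Rightarrow> int \<Rightarrow> int \<Rightarrow> wt set" where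
  "C3bar a b k = {(3 * l, 0) | l. 1 \<le> l \<and> l \<le> min (k - a - b - 1) (b - 1)}"

end

theory Submission
  imports Defs
begin

lemma memR:
  fixes A B :: int
  assumes nu: "nu \<in> dominant k"
    and hA: "fusA lam mu nu = of_int A" and hB: "fusB lam mu nu = of_int B"
    and pos: "0 \<le> A" "0 \<le> B"
    and bnd: "\<forall>t \<in> {fst lam + snd lam, fst mu + snd mu, fst nu + snd nu,
          A - fst lam, A - fst mu, A - snd nu,
          B - snd lam, B - snd mu, B - fst nu}. t \<le> A \<and> t \<le> B \<and> t \<le> k"
  shows "nu \<in> fusionR k lam mu"
proof -
  have M: "\<And>x::rat. k0min lam mu nu \<le> x \<longleftrightarrow> (\<forall>t \<in> {fst lam + snd lam, fst mu + snd mu, fst nu + snd nu,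
          A - fst lam, A - fst mu, A - snd nu,
          B - snd lam, B - snd mu, B - fst nu}. of_int t \<le> x)"
    unfolding k0min_def Let_def hA hB
    by (subst Max_le_iff) auto
  have km: "k0min lam mu nu \<le> k0max lam mu nu \<and> k0min lam mu nu \<le> of_int k"
    unfolding M k0max_def hA hB using bnd by (simp only: Ball_def) auto
  have "fusion_mult k lam mu nu \<noteq> 0"
    unfolding fusion_mult_def Let_def using km pos hA hB
    by (simp add: min_def)
  then show ?thesis using nu unfolding fusionR_def by simp
qed
lemma c1_0:
  fixes a b k l :: int
  assumes "a \<ge> b" and "b \<ge> 2" and "k \<ge> a + b + 2" "1 \<le> l" "l \<le> k - a - b - 1" "l \<le> b - 1"
  shows "(a - 1, b + 2) \<in> fusionR k (a, b) (0, 3*l)"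
  apply (rule memR[where A="a+b+1+l" and B="a+b+2*l"])
  using assms
  apply (simp_all add: dominant_def)
  apply (simp add: fusA_def field_simps)
  apply (simp add: fusB_def field_simps)
  done

lemma c1_1:
  fixes a b k l :: int
  assumes "a \<ge> b" and "b \<ge> 2" and "k \<ge> a + b + 2" "1 \<le> l" "l \<le> k - a - b - 1" "l \<le> b - 1"
  shows "(a - 2, b + 1) \<in> fusionR k (a, b) (0, 3*l)"
  apply (rule memR[where A="a+b+l" and B="a+b+2*l-1"])
  using assms
  apply (simp_all add: dominant_def)
  apply (simp add: fusA_def field_simps)
  apply (simp add: fusB_def field_simps)
  done

lemma c1_2:
  fixes a b k l :: int
  assumes "a \<ge> b" and "b \<ge> 2" and "k \<ge> a + b + 2" "1 \<le> l" "l \<le> k - a - b - 1" "l \<le> b - 1"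
  shows "(a + 1, b + 1) \<in> fusionR k (a, b) (0, 3*l)"
  apply (rule memR[where A="a+b+1+l" and B="a+b+1+2*l"])
  using assms
  apply (simp_all add: dominant_def)
  apply (simp add: fusA_def field_simps)
  apply (simp add: fusB_def field_simps)
  done

lemma c1_3:
  fixes a b k l :: int
  assumes "a \<ge> b" and "b \<ge> 2" and "k \<ge> a + b + 2" "1 \<le> l" "l \<le> k - a - b - 1" "l \<le> b - 1"
  shows "(a - 1, b - 1) \<in> fusionR k (a, b) (0, 3*l)"
  apply (rule memR[where A="a+b-1+l" and B="a+b-1+2*l"])
  using assms
  apply (simp_all add: dominant_def)
  apply (simp add: fusA_def field_simps)
  apply (simp add: fusB_def field_simps)
  done

lemma c2_0:
  fixes a b k l :: int
  assumes "a \<ge> b" and "b \<ge> 2" and "k \<ge> a + b + 2" "1 \<le> l" "l \<le> k - a - b - 1" "l \<le> b - 1"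
  shows "(a - 1, b + 2) \<in> fusionR k (a, b) (3*l, 0)"
  apply (rule memR[where A="a+b+1+2*l" and B="a+b+l"])
  using assms
  apply (simp_all add: dominant_def)
  apply (simp add: fusA_def field_simps)
  apply (simp add: fusB_def field_simps)
  done

lemma c2_1:
  fixes a b k l :: int
  assumes "a \<ge> b" and "b \<ge> 2" and "k \<ge> a + b + 2" "1 \<le> l" "l \<le> k - a - b - 1" "l \<le> b - 1"
  shows "(a - 2, b + 1) \<in> fusionR k (a, b) (3*l, 0)"
  apply (rule memR[where A="a+b+2*l" and B="a+b+l-1"])
  using assms
  apply (simp_all add: dominant_def)
  apply (simp add: fusA_def field_simps)
  apply (simp add: fusB_def field_simps)
  done

lemma c2_2:
  fixes a b k l :: int
  assumes "a \<ge> b" and "b \<ge> 2" and "k \<ge> a + b + 2" "1 \<le> l" "l \<le> k - a - b - 1" "l \<le> b - 1"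
  shows "(a + 1, b + 1) \<in> fusionR k (a, b) (3*l, 0)"
  apply (rule memR[where A="a+b+1+2*l" and B="a+b+1+l"])
  using assms
  apply (simp_all add: dominant_def)
  apply (simp add: fusA_def field_simps)
  apply (simp add: fusB_def field_simps)
  done

lemma c2_3:
  fixes a b k l :: int
  assumes "a \<ge> b" and "b \<ge> 2" and "k \<ge> a + b + 2" "1 \<le> l" "l \<le> k - a - b - 1" "l \<le> b - 1"
  shows "(a - 1, b - 1) \<in> fusionR k (a, b) (3*l, 0)"
  apply (rule memR[where A="a+b-1+2*l" and B="a+b-1+l"])
  using assms
  apply (simp_all add: dominant_def)
  apply (simp add: fusA_def field_simps)
  apply (simp add: fusB_def field_simps)
  done

theorem mainTheorem13:
  fixes a b k i j :: int
  assumes "a \<ge> b" and "b \<ge> 2" and "k \<ge> a + b + 2"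
    and "(i, j) \<in> C3 a b k \<union> C3bar a b k"
  shows "(a - 1, b + 2) \<in> fusionR k (a, b) (i, j)
       \<and> (a - 2, b + 1) \<in> fusionR k (a, b) (i, j)
       \<and> (a + 1, b + 1) \<in> fusionR k (a, b) (i, j)
       \<and> (a - 1, b - 1) \<in> fusionR k (a, b) (i, j)"
  using assms(4)
proof
  assume "(i, j) \<in> C3 a b k"
  then obtain l where l: "i = 0" "j = 3*l" "1 \<le> l" "l \<le> k - a - b - 1" "l \<le> b - 1"
    unfolding C3_def by auto
  show ?thesis using c1_0[OF assms(1-3) l(3-5)] c1_1[OF assms(1-3) l(3-5)]
    c1_2[OF assms(1-3) l(3-5)] c1_3[OF assms(1-3) l(3-5)] l(1,2) by simp
next
  assume "(i, j) \<in> C3bar a b k"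
  then obtain l where l: "j = 0" "i = 3*l" "1 \<le> l" "l \<le> k - a - b - 1" "l \<le> b - 1"
    unfolding C3bar_def by auto
  show ?thesis using c2_0[OF assms(1-3) l(3-5)] c2_1[OF assms(1-3) l(3-5)]
    c2_2[OF assms(1-3) l(3-5)] c2_3[OF assms(1-3) l(3-5)] l(1,2) by simp
qed

end
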